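(* Let $\pi$ be a probability density on $\mathbb{R}^d$, $\sigma>0$, $K\ge1$, $\alpha_1,\dots,\alpha_K\in(0,1)$, and $f_\theta:\{1,\dots,K\}\times\mathbb{R}^d\to\mathbb{R}^d$. Set $\lambda_k:=1-\sqrt{1-\alpha_k}$. Let $p^{\mathrm{ref}}(y_{0:K})$ be the law of the Markov chain $y_0\sim\mathcal{N}(0,\sigma^2I)$, $y_{k+1}=\sqrt{1-\alpha_{K-k}}\,y_k+\sigma\sqrt{\alpha_{K-k}}\,\varepsilon_k$, and $q^\theta(y_{0:K})$ the law of the Markov chain $y_0\sim\mathcal{N}(0,\sigma^2I)$, $$y_{k+1}=\sqrt{1-\alpha_{K-k}}\,y_k+2\sigma^2\lambda_{K-k}\,f_\theta(K-k,y_k)+\sigma\sqrt{\alpha_{K-k}}\,\varepsilon_k,$$ for $k=0,\dots,K-1$, where $\varepsilon_k\stackrel{\text{i.i.d.}}{\sim}\mathcal{N}(0,I)$. For $k=1,\dots,K$ define $\epsilon_k:=\frac{1}{\sigma\sqrt{\alpha_k}}\big(y_{K-k+1}-\sqrt{1-\alpha_k}\,y_{K-k}-2\sigma^2\lambda_kf_\theta(k,y_{K-k})\big)$. Then for $y_{0:K}\sim q^\theta$, the $\epsilon_k$ are i.i.d. $\mathcal{N}(0,I)$ and $$\log\Big(\frac{q^\theta(y_{0:K})}{p^{\mathrm{ref}}(y_{0:K})}\Big)=2\sigma^2\sum_{k=1}^K\frac{\lambda_k^2}{\alpha_k}\|f_\theta(k,y_{K-k})\|^2+2\sigma\sum_{k=1}^K\frac{\lambda_k}{\sqrt{\alpha_k}}f_\theta(k,y_{K-k})^\top\epsilon_k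 .$$ Moreover, letting $p(y_{0:K}):=p^{\mathrm{ref}}(y_{0:K})\,\pi(y_K)/\mathcal{N}(y_K;0,\sigma^2I)$, one has $\mathrm{KL}(q^\theta\|p)=\mathrm{KL}(q^\theta\|p^{\mathrm{ref}})+\mathbb{E}_{q^\theta}\big[\log\big(\mathcal{N}(y_K;0,\sigma^2I)/\pi(y_K)\big)\big]$ and $$\mathrm{KL}(q^\theta\|p)=\mathbb{E}_{q^\theta}\Big[2\sigma^2\sum_{k=1}^K\frac{\lambda_k^2}{\alpha_k}\|f_\theta(k,y_{K-k})\|^2+\ln\Big(\frac{\mathcal{N}(y_K;0,\sigma^2I)}{\pi(y_K)}\Big)\Big].$$
   Context: $\mathcal{N}(y;0,\sigma^2I)$ denotes the Gaussian density with mean $0$ and covariance $\sigma^2I$ at $y$. The chain $p^{\mathrm{ref}}$ is the exact discretisation of the time reversal of the stationary Ornstein--Uhlenbeck process $\mathrm{d}x_t=-\beta_tx_t\mathrm{d}t+\sigma\sqrt{2\beta_t}\mathrm{d}B_t$ with $\alpha_k=1-\exp(-2\int_{(k-1)\delta}^{k\delta}\beta_s\mathrm{d}s)$; its marginals all equal $\mathcal{N}(0,\sigma^2I)$. The density $p$ is the time reversal of the discrete forward noising process $\pi(x_0)\prod_{k=1}^K\mathcal{N}(x_k;\sqrt{1-\alpha_k}x_{k-1},\sigma^2\alpha_kI)$ with $y_k=x_{K-k}$. *)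

theory Defs
  imports "HOL-Probability.Probability"
begin

definition gauss_dens :: "real \<Rightarrow> 'a::euclidean_space \<Rightarrow> 'a \<Rightarrow> real" where
  "gauss_dens v m x = (2 * pi * v) powr (- real DIM('a) / 2) * exp (- (norm (x - m))\<^sup>2 / (2 * v))"

definition std_gauss :: "'a::euclidean_space measure" where
  "std_gauss = density lborel (\<lambda>x. ennreal (gauss_dens 1 0 x))"

definition traj_space :: "nat \<Rightarrow> (nat \<Rightarrow> 'a::euclidean_space) measure" where
  "traj_space K = PiM {0..K} (\<lambda>_. lborel)"

definition lam :: "(nat \<Rightarrow> real) \<Rightarrow> nat \<Rightarrow> real" where
  "lam \<alpha> k = 1 - sqrt (1 - \<alpha> k)"

definition pref_dens :: "real \<Rightarrow> nat \<Rightarrow> (nat \<Rightarrow> real) \<Rightarrow> (nat \<Rightarrow> 'a::euclidean_space) \<Rightarrow> real" where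
  "pref_dens \<sigma> K \<alpha> y =
     gauss_dens (\<sigma>\<^sup>2) 0 (y 0) *
     (\<Prod>k<K. gauss_dens (\<sigma>\<^sup>2 * \<alpha> (K - k)) (sqrt (1 - \<alpha> (K - k)) *\<^sub>R y k) (y (Suc k)))"

definition q_dens :: "real \<Rightarrow> nat \<Rightarrow> (nat \<Rightarrow> real) \<Rightarrow> (nat \<Rightarrow> 'a \<Rightarrow> 'a) \<Rightarrow> (nat \<Rightarrow> 'a::euclidean_space) \<Rightarrow> real" where
  "q_dens \<sigma> K \<alpha> f y =
     gauss_dens (\<sigma>\<^sup>2) 0 (y 0) *
     (\<Prod>k<K. gauss_dens (\<sigma>\<^sup>2 * \<alpha> (K - k))
        (sqrt (1 - \<alpha> (K - k)) *\<^sub>R y k + (2 * \<sigma>\<^sup>2 * lam \<alpha> (K - k)) *\<^sub>R f (K - k) (y k)) (y (Suc k)))"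

definition p_dens :: "real \<Rightarrow> nat \<Rightarrow> (nat \<Rightarrow> real) \<Rightarrow> ('a \<Rightarrow> real) \<Rightarrow> (nat \<Rightarrow> 'a::euclidean_space) \<Rightarrow> real" where
  "p_dens \<sigma> K \<alpha> \<pi> y = pref_dens \<sigma> K \<alpha> y * \<pi> (y K) / gauss_dens (\<sigma>\<^sup>2) 0 (y K)"

definition q_meas :: "real \<Rightarrow> nat \<Rightarrow> (nat \<Rightarrow> real) \<Rightarrow> (nat \<Rightarrow> 'a \<Rightarrow> 'a) \<Rightarrow> (nat \<Rightarrow> 'a::euclidean_space) measure" where
  "q_meas \<sigma> K \<alpha> f = density (traj_space K) (\<lambda>y. ennreal (q_dens \<sigma> K \<alpha> f y))"

definition eps_noise :: "real \<Rightarrow> nat \<Rightarrow> (nat \<Rightarrow> real) \<Rightarrow> (nat \<Rightarrow> 'a \<Rightarrow> 'a) \<Rightarrow> nat \<Rightarrow> (nat \<Rightarrow> 'a::euclidean_space) \<Rightarrow> 'a" where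
  "eps_noise \<sigma> K \<alpha> f k y = (1 / (\<sigma> * sqrt (\<alpha> k))) *\<^sub>R
     (y (K - k + 1) - sqrt (1 - \<alpha> k) *\<^sub>R y (K - k) - (2 * \<sigma>\<^sup>2 * lam \<alpha> k) *\<^sub>R f k (y (K - k)))"

definition KL_dens :: "'b measure \<Rightarrow> ('b \<Rightarrow> real) \<Rightarrow> ('b \<Rightarrow> real) \<Rightarrow> real" where
  "KL_dens M q p = (\<integral>y. ln (q y / p y) \<partial>(density M (\<lambda>y. ennreal (q y))))"

end

theory Submission
  imports Defs
begin

lemma gauss_dens_pos: "0 < v \<Longrightarrow> 0 < gauss_dens v m x"
  unfolding gauss_dens_def by simp

lemma gauss_meas[measurable]: "gauss_dens v m \<in> borel_measurable borel"
  unfolding gauss_dens_def by measurable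

lemma gauss_dens_1_prod:
  "gauss_dens 1 0 (x::'a::euclidean_space) = (\<Prod>b\<in>Basis. normal_density 0 1 (x \<bullet> b))"
proof -
  have "(\<Prod>b\<in>Basis. normal_density 0 1 (x \<bullet> b)) =
      (\<Prod>b\<in>(Basis::'a set). 1 / sqrt (2*pi) * exp (- (x \<bullet> b)\<^sup>2 / 2))"
    by (intro prod.cong) (simp_all add: normal_density_def)
  also have "\<dots> = (1 / sqrt (2*pi)) ^ DIM('a) * exp (\<Sum>b\<in>(Basis::'a set). - (x \<bullet> b)\<^sup>2 / 2)"
    by (simp only: prod.distrib exp_sum[OF finite_Basis] prod_constant)
  also have "(\<Sum>b\<in>(Basis::'a set). - (x \<bullet> b)\<^sup>2 / 2) = - (norm x)\<^sup>2 / 2"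
  proof -
    have "inner x x = (\<Sum>b\<in>(Basis::'a set). (x \<bullet> b) * (x \<bullet> b))" by (rule euclidean_inner)
    then have "(norm x)\<^sup>2 = (\<Sum>b\<in>(Basis::'a set). (x \<bullet> b)\<^sup>2)"
      using power2_norm_eq_inner[of x] by (simp add: power2_eq_square)
    then show ?thesis by (simp add: sum_divide_distrib[symmetric] sum_negf)
  qed
  also have "(1 / sqrt (2*pi)) ^ DIM('a) = (2*pi) powr (- real DIM('a) / 2)"
  proof -
    have "(1 / sqrt (2*pi)) = (2*pi) powr (-1/2)"
      by (simp add: powr_minus_divide powr_half_sqrt[symmetric] powr_minus)
    then show ?thesis by (simp add: powr_realpow[symmetric] powr_powr)
  qed
  finally show ?thesis unfolding gauss_dens_def by simp
qed

lemma nn_integral_gauss1: "(\<integral>\<^sup>+ x. ennreal (gauss_dens 1 0 (x::'a::euclidean_space)) \<partial>lborel) = 1"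
proof -
  have "(\<integral>\<^sup>+ x. ennreal (gauss_dens 1 0 (x::'a)) \<partial>lborel)
     = (\<integral>\<^sup>+ x. (\<Prod>b\<in>Basis. ennreal (normal_density 0 1 ((x::'a) \<bullet> b))) \<partial>lborel)"
  proof (intro nn_integral_cong)
    fix x :: 'a
    show "ennreal (gauss_dens 1 0 x) = (\<Prod>b\<in>Basis. ennreal (normal_density 0 1 (x \<bullet> b)))"
      unfolding gauss_dens_1_prod by (rule prod_ennreal[symmetric]) (simp add: normal_density_nonneg)
  qed
  also have "\<dots> = (\<Prod>b\<in>(Basis::'a set). (\<integral>\<^sup>+x. ennreal (normal_density 0 1 x) \<partial>lborel))"
    by (rule nn_integral_lborel_prod) auto
  also have "(\<integral>\<^sup>+x. ennreal (normal_density 0 1 x) \<partial>lborel) = 1"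
    by (subst nn_integral_eq_integral) auto
  finally show ?thesis by simp
qed

lemma gauss_scale:
  assumes s: "s \<noteq> 0"
  shows "\<bar>s\<bar> ^ DIM('a) * gauss_dens (s\<^sup>2) m (m + s *\<^sub>R (x::'a::euclidean_space)) = gauss_dens 1 0 x"
proof -
  have s2: "0 < s\<^sup>2" using s by simp
  have "(2 * pi * s\<^sup>2) powr (- real DIM('a) / 2) = (2 * pi) powr (- real DIM('a) / 2) * (s\<^sup>2) powr (- real DIM('a) / 2)"
    using s2 by (simp add: powr_mult)
  also have "(s\<^sup>2) powr (- real DIM('a) / 2) = \<bar>s\<bar> powr (- real DIM('a))"
  proof -
    have "s\<^sup>2 = \<bar>s\<bar> powr 2" using s by (simp add: powr_realpow[symmetric])
    then have "(s\<^sup>2) powr (- real DIM('a) / 2) = (\<bar>s\<bar> powr 2) powr (- real DIM('a) / 2)" by simp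
    also have "\<dots> = \<bar>s\<bar> powr (2 * (- real DIM('a) / 2))" by (rule powr_powr)
    finally show ?thesis by simp
  qed
  also have "\<bar>s\<bar> powr (- real DIM('a)) = 1 / \<bar>s\<bar> ^ DIM('a)"
    using s by (simp add: powr_minus_divide powr_realpow)
  finally have c: "(2 * pi * s\<^sup>2) powr (- real DIM('a) / 2) = (2 * pi) powr (- real DIM('a) / 2) / \<bar>s\<bar> ^ DIM('a)"
    by simp
  have e: "- (norm (m + s *\<^sub>R x - m))\<^sup>2 / (2 * s\<^sup>2) = - (norm (x - 0))\<^sup>2 / (2 * 1)"
  proof -
    have "(norm (m + s *\<^sub>R x - m))\<^sup>2 = s\<^sup>2 * (norm x)\<^sup>2"
      by (simp add: power_mult_distrib)
    then show ?thesis using s by (simp add: field_simps)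
  qed
  show ?thesis unfolding gauss_dens_def c e using s by (simp add: field_simps)
qed

lemma gauss_affine:
  fixes G :: "'a::euclidean_space \<Rightarrow> ennreal"
  assumes s: "s \<noteq> 0" and G[measurable]: "G \<in> borel_measurable borel"
  shows "(\<integral>\<^sup>+ z. G ((1/s) *\<^sub>R (z - m)) * ennreal (gauss_dens (s\<^sup>2) m z) \<partial>lborel)
       = (\<integral>\<^sup>+ e. G e * ennreal (gauss_dens 1 0 e) \<partial>lborel)"
proof -
  let ?h = "\<lambda>z. G ((1/s) *\<^sub>R (z - m)) * ennreal (gauss_dens (s\<^sup>2) m z)"
  have eq: "lborel = density (distr lborel borel (\<lambda>x. m + s *\<^sub>R x)) (\<lambda>_. \<bar>s\<bar>^DIM('a))"
    by (rule lborel_affine[OF s])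
  have "(\<integral>\<^sup>+ z. ?h z \<partial>lborel) = (\<integral>\<^sup>+ z. ?h z \<partial>(density (distr lborel borel (\<lambda>x. m + s *\<^sub>R x)) (\<lambda>_. \<bar>s\<bar>^DIM('a))))"
    by (rule arg_cong[where f="\<lambda>M. \<integral>\<^sup>+z. ?h z \<partial>M"]) (rule eq)
  also have "\<dots> = (\<integral>\<^sup>+ z. ennreal (\<bar>s\<bar>^DIM('a)) * ?h z \<partial>(distr lborel borel (\<lambda>x. m + s *\<^sub>R x)))"
    by (subst nn_integral_density) auto
  also have "\<dots> = (\<integral>\<^sup>+ x. ennreal (\<bar>s\<bar>^DIM('a)) * ?h (m + s *\<^sub>R x) \<partial>lborel)"
    by (subst nn_integral_distr) auto
  also have "\<dots> = (\<integral>\<^sup>+ e. G e * ennreal (gauss_dens 1 0 e) \<partial>lborel)"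
  proof (intro nn_integral_cong)
    fix x :: 'a
    have "ennreal (\<bar>s\<bar>^DIM('a)) * ?h (m + s *\<^sub>R x) = G x * (ennreal (\<bar>s\<bar>^DIM('a)) * ennreal (gauss_dens (s\<^sup>2) m (m + s *\<^sub>R x)))"
      using s by (simp add: mult_ac)
    also have "\<dots> = G x * ennreal (gauss_dens 1 0 x)"
    proof -
      have "ennreal (\<bar>s\<bar>^DIM('a)) * ennreal (gauss_dens (s\<^sup>2) m (m + s *\<^sub>R x))
          = ennreal (\<bar>s\<bar>^DIM('a) * gauss_dens (s\<^sup>2) m (m + s *\<^sub>R x))"
        by (rule ennreal_mult[symmetric]) (auto simp: gauss_dens_def)
      then show ?thesis by (simp only: gauss_scale[OF s])
    qed
    finally show "ennreal (\<bar>s\<bar>^DIM('a)) * ?h (m + s *\<^sub>R x) = G x * ennreal (gauss_dens 1 0 x)" .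
  qed
  finally show ?thesis .
qed




lemma gauss_dens_nonneg: "0 < v \<Longrightarrow> 0 \<le> gauss_dens v m x"
  using gauss_dens_pos[of v m x] by simp

lemma gauss_dens_meas[measurable (raw)]:
  assumes [measurable]: "g \<in> borel_measurable M" "h \<in> borel_measurable M"
  shows "(\<lambda>y. gauss_dens v (g y) (h y)) \<in> borel_measurable M"
  unfolding gauss_dens_def by measurable

lemma sets_std_gauss[measurable_cong, simp]: "sets std_gauss = sets borel"
  unfolding std_gauss_def by simp

lemma space_std_gauss[simp]: "space std_gauss = UNIV"
  unfolding std_gauss_def by simp

lemma nn_integral_std_gauss:
  "G \<in> borel_measurable borel \<Longrightarrow> (\<integral>\<^sup>+ e. G e \<partial>std_gauss) = (\<integral>\<^sup>+ e. G e * ennreal (gauss_dens 1 0 e) \<partial>lborel)"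
  unfolding std_gauss_def by (subst nn_integral_density) (auto simp: mult.commute)

lemma prob_space_std_gauss: "prob_space (std_gauss :: 'a::euclidean_space measure)"
proof
  have "emeasure (std_gauss::'a measure) (space std_gauss) = (\<integral>\<^sup>+ e. 1 \<partial>(std_gauss::'a measure))"
    by simp
  also have "\<dots> = 1" by (subst nn_integral_std_gauss) (auto simp: nn_integral_gauss1)
  finally show "emeasure (std_gauss::'a measure) (space std_gauss) = 1" .
qed

lemma gauss_kernel:
  fixes G :: "'a::euclidean_space \<Rightarrow> ennreal"
  assumes s: "s \<noteq> 0" and G: "G \<in> borel_measurable borel"
  shows "(\<integral>\<^sup>+ z. G ((1/s) *\<^sub>R (z - m)) * ennreal (gauss_dens (s\<^sup>2) m z) \<partial>lborel) = (\<integral>\<^sup>+ e. G e \<partial>std_gauss)"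
  using gauss_affine[OF s G] nn_integral_std_gauss[OF G] by simp

lemma std_gauss_sym:
  fixes G :: "'a::euclidean_space \<Rightarrow> ennreal"
  assumes G[measurable]: "G \<in> borel_measurable borel"
  shows "(\<integral>\<^sup>+ e. G (- e) \<partial>std_gauss) = (\<integral>\<^sup>+ e. G e \<partial>std_gauss)"
proof -
  have "(\<integral>\<^sup>+ e. G (- e) \<partial>std_gauss) = (\<integral>\<^sup>+ e. G (- e) * ennreal (gauss_dens 1 0 e) \<partial>lborel)"
    by (rule nn_integral_std_gauss) measurable
  also have "\<dots> = (\<integral>\<^sup>+ z. G ((1/(-1)) *\<^sub>R (z - 0)) * ennreal (gauss_dens ((-1)\<^sup>2) 0 z) \<partial>lborel)"
    by simp
  also have "\<dots> = (\<integral>\<^sup>+ e. G e \<partial>std_gauss)"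
    by (rule gauss_kernel) auto
  finally show ?thesis .
qed

lemma gauss_total: "0 < v \<Longrightarrow> (\<integral>\<^sup>+ z. ennreal (gauss_dens v m (z::'a::euclidean_space)) \<partial>lborel) = 1"
proof -
  assume v: "0 < v"
  have "(\<integral>\<^sup>+ z. ennreal (gauss_dens v m (z::'a)) \<partial>lborel) =
     (\<integral>\<^sup>+ z. (\<lambda>_. 1) ((1/sqrt v) *\<^sub>R (z - m)) * ennreal (gauss_dens ((sqrt v)\<^sup>2) m z) \<partial>lborel)"
    using v by simp
  also have "\<dots> = (\<integral>\<^sup>+ e. 1 \<partial>(std_gauss::'a measure))"
    by (rule gauss_kernel) (use v in auto)
  also have "\<dots> = 1" using prob_space.emeasure_space_1[OF prob_space_std_gauss] by simp
  finally show ?thesis .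
qed



lemma sq_le_exp: "(t::real) \<le> 4 * exp (t / 4)"
  using exp_ge_add_one_self[of "t/4"] by linarith

lemma std_gauss_moment2: "(\<integral>\<^sup>+ e. ennreal ((norm (e::'a::euclidean_space))\<^sup>2) \<partial>std_gauss) < \<infinity>"
proof -
  define C where "C = 4 * (2*pi) powr (- real DIM('a) / 2) / (4*pi) powr (- real DIM('a) / 2)"
  have bound: "(norm e)\<^sup>2 * gauss_dens 1 0 e \<le> C * gauss_dens 2 0 e" for e :: 'a
  proof -
    have "(norm e)\<^sup>2 * exp (- (norm e)\<^sup>2 / 2) \<le> 4 * exp ((norm e)\<^sup>2 / 4) * exp (- (norm e)\<^sup>2 / 2)"
      by (intro mult_right_mono sq_le_exp) auto
    also have "\<dots> = 4 * exp (- (norm e)\<^sup>2 / 4)"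
      by (simp add: exp_add[symmetric])
    finally have *: "(norm e)\<^sup>2 * exp (- (norm e)\<^sup>2 / 2) \<le> 4 * exp (- (norm e)\<^sup>2 / 4)" .
    have "(norm e)\<^sup>2 * gauss_dens 1 0 e = (2*pi) powr (- real DIM('a) / 2) * ((norm e)\<^sup>2 * exp (- (norm e)\<^sup>2 / 2))"
      by (simp add: gauss_dens_def)
    also have "\<dots> \<le> (2*pi) powr (- real DIM('a) / 2) * (4 * exp (- (norm e)\<^sup>2 / 4))"
      by (intro mult_left_mono *) auto
    also have "\<dots> = C * gauss_dens 2 0 e"
      by (simp add: C_def gauss_dens_def)
    finally show ?thesis .
  qed
  have "(\<integral>\<^sup>+ e. ennreal ((norm (e::'a))\<^sup>2) \<partial>std_gauss) = (\<integral>\<^sup>+ e. ennreal ((norm e)\<^sup>2) * ennreal (gauss_dens 1 0 (e::'a)) \<partial>lborel)"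
    by (rule nn_integral_std_gauss) measurable
  also have "\<dots> \<le> (\<integral>\<^sup>+ e. ennreal C * ennreal (gauss_dens 2 0 (e::'a)) \<partial>lborel)"
  proof (intro nn_integral_mono)
    fix x :: 'a
    have C0: "0 \<le> C" by (simp add: C_def)
    have "ennreal ((norm x)\<^sup>2) * ennreal (gauss_dens 1 0 x) = ennreal ((norm x)\<^sup>2 * gauss_dens 1 0 x)"
      by (rule ennreal_mult[symmetric]) (auto simp: gauss_dens_nonneg)
    also have "\<dots> \<le> ennreal (C * gauss_dens 2 0 x)" by (rule ennreal_leI) (rule bound)
    also have "\<dots> = ennreal C * ennreal (gauss_dens 2 0 x)"
      by (rule ennreal_mult) (auto simp: gauss_dens_nonneg C0)
    finally show "ennreal ((norm x)\<^sup>2) * ennreal (gauss_dens 1 0 x) \<le> ennreal C * ennreal (gauss_dens 2 0 x)" .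
  qed
  also have "\<dots> = ennreal C * 1"
    by (subst nn_integral_cmult) (auto simp: gauss_total)
  finally show ?thesis using ennreal_less_top[of C] by (simp add: le_less_trans)
qed

lemma gauss_dens_nonneg': "0 \<le> gauss_dens v m x"
  by (simp add: gauss_dens_def)

lemma measurable_std_gauss[simp]: "measurable std_gauss M = measurable borel M"
  by (rule measurable_cong_sets) auto

lemma psf: "product_sigma_finite (\<lambda>_::nat. (lborel::'a::euclidean_space measure))"
  unfolding product_sigma_finite_def by (simp add: lborel.sigma_finite_measure_axioms)

lemma step_ln:
  fixes y' m F :: "'a::euclidean_space"
  assumes sg: "0 < \<sigma>" and a: "0 < a"
  shows "ln (gauss_dens (\<sigma>\<^sup>2 * a) (m + (2 * \<sigma>\<^sup>2 * l) *\<^sub>R F) y' / gauss_dens (\<sigma>\<^sup>2 * a) m y')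
    = 2 * \<sigma>\<^sup>2 * (l\<^sup>2 / a * (norm F)\<^sup>2)
      + 2 * \<sigma> * (l / sqrt a * (F \<bullet> ((1 / (\<sigma> * sqrt a)) *\<^sub>R (y' - m - (2 * \<sigma>\<^sup>2 * l) *\<^sub>R F))))"
proof -
  define d where "d = (2 * \<sigma>\<^sup>2 * l) *\<^sub>R F"
  define r where "r = y' - m - d"
  define v where "v = \<sigma>\<^sup>2 * a"
  define s where "s = sqrt a"
  have v: "0 < v" using sg a by (simp add: v_def)
  have s: "0 < s" "s\<^sup>2 = a" using a by (auto simp: s_def)
  define C where "C = (2 * pi * v) powr (- real DIM('a) / 2)"
  have C: "0 < C" using v by (simp add: C_def)
  have "gauss_dens v (m + d) y' / gauss_dens v m y' = exp (- (norm r)\<^sup>2 / (2 * v)) / exp (- (norm (r + d))\<^sup>2 / (2 * v))"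
    using C unfolding gauss_dens_def C_def[symmetric] r_def by (simp add: algebra_simps)
  also have "\<dots> = exp ((norm (r + d))\<^sup>2 / (2 * v) - (norm r)\<^sup>2 / (2 * v))"
    by (simp add: exp_diff[symmetric])
  finally have "ln (gauss_dens v (m + d) y' / gauss_dens v m y') = ((norm (r + d))\<^sup>2 - (norm r)\<^sup>2) / (2 * v)"
    by (simp add: diff_divide_distrib)
  also have "(norm (r + d))\<^sup>2 - (norm r)\<^sup>2 = 2 * (r \<bullet> d) + (norm d)\<^sup>2"
    by (simp add: power2_norm_eq_inner inner_add_left inner_add_right inner_commute)
  also have "r = (\<sigma> * s) *\<^sub>R ((1 / (\<sigma> * s)) *\<^sub>R r)" using sg s by simp
  finally have eq: "ln (gauss_dens v (m + d) y' / gauss_dens v m y')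
      = (2 * (\<sigma> * s * (2 * \<sigma>\<^sup>2 * l)) * (((1 / (\<sigma> * s)) *\<^sub>R r) \<bullet> F) + (2 * \<sigma>\<^sup>2 * l)\<^sup>2 * (norm F)\<^sup>2) / (2 * v)"
    by (simp add: d_def power_mult_distrib inner_commute)
  show ?thesis
    unfolding d_def[symmetric] r_def[symmetric] v_def[symmetric] s_def[symmetric] eq
    using sg s a by (simp add: v_def inner_commute field_simps power2_eq_square)
qed

lemma part2:
  fixes f :: "nat \<Rightarrow> 'a::euclidean_space \<Rightarrow> 'a"
  assumes sg: "0 < \<sigma>" and alpha_range: "\<And>k. k \<in> {1..K} \<Longrightarrow> 0 < \<alpha> k \<and> \<alpha> k < 1"
  shows "ln (q_dens \<sigma> K \<alpha> f y / pref_dens \<sigma> K \<alpha> y) =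
        2 * \<sigma>\<^sup>2 * (\<Sum>k=1..K. (lam \<alpha> k)\<^sup>2 / \<alpha> k * (norm (f k (y (K - k))))\<^sup>2)
      + 2 * \<sigma> * (\<Sum>k=1..K. lam \<alpha> k / sqrt (\<alpha> k) * (f k (y (K - k)) \<bullet> eps_noise \<sigma> K \<alpha> f k y))"
proof -
  define T where "T k = 2 * \<sigma>\<^sup>2 * ((lam \<alpha> k)\<^sup>2 / \<alpha> k * (norm (f k (y (K - k))))\<^sup>2)
      + 2 * \<sigma> * (lam \<alpha> k / sqrt (\<alpha> k) * (f k (y (K - k)) \<bullet> eps_noise \<sigma> K \<alpha> f k y))" for k
  define a where "a k = gauss_dens (\<sigma>\<^sup>2 * \<alpha> (K - k))
        (sqrt (1 - \<alpha> (K - k)) *\<^sub>R y k + (2 * \<sigma>\<^sup>2 * lam \<alpha> (K - k)) *\<^sub>R f (K - k) (y k)) (y (Suc k))" for k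
  define b where "b k = gauss_dens (\<sigma>\<^sup>2 * \<alpha> (K - k)) (sqrt (1 - \<alpha> (K - k)) *\<^sub>R y k) (y (Suc k))" for k
  have ak: "0 < a k" "0 < b k" if "k < K" for k
    using alpha_range[of "K - k"] that sg by (auto simp: a_def b_def intro!: gauss_dens_pos)
  have g0: "0 < gauss_dens (\<sigma>\<^sup>2) 0 (y 0)" using sg by (intro gauss_dens_pos) simp
  have "q_dens \<sigma> K \<alpha> f y / pref_dens \<sigma> K \<alpha> y = (\<Prod>k<K. a k) / (\<Prod>k<K. b k)"
    unfolding q_dens_def pref_dens_def a_def b_def using g0 by simp
  also have "\<dots> = (\<Prod>k<K. a k / b k)" by (rule prod_dividef[symmetric])
  finally have "ln (q_dens \<sigma> K \<alpha> f y / pref_dens \<sigma> K \<alpha> y) = (\<Sum>k<K. ln (a k / b k))"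
    by (simp only:, subst ln_prod) (use ak in \<open>force intro: divide_pos_pos\<close>)+
  also have "\<dots> = (\<Sum>k<K. T (K - k))"
  proof (intro sum.cong refl)
    fix k assume k: "k \<in> {..<K}"
    then have al: "0 < \<alpha> (K - k)" using alpha_range[of "K - k"] by auto
    have e: "eps_noise \<sigma> K \<alpha> f (K - k) y = (1 / (\<sigma> * sqrt (\<alpha> (K - k)))) *\<^sub>R
        (y (Suc k) - sqrt (1 - \<alpha> (K - k)) *\<^sub>R y k - (2 * \<sigma>\<^sup>2 * lam \<alpha> (K - k)) *\<^sub>R f (K - k) (y k))"
      using k by (simp add: eps_noise_def Suc_diff_le)
    have kk: "K - (K - k) = k" using k by auto
    show "ln (a k / b k) = T (K - k)"
      unfolding a_def b_def T_def e kk
      by (rule step_ln[OF sg al, where m="sqrt (1 - \<alpha> (K - k)) *\<^sub>R y k" and l="lam \<alpha> (K - k)"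
          and F="f (K - k) (y k)" and y'="y (Suc k)"])
  qed
  also have "\<dots> = (\<Sum>k=1..K. T k)"
    by (rule sum.reindex_bij_witness[of _ "\<lambda>k. K - k" "\<lambda>k. K - k"]) auto
  also have "\<dots> = 2 * \<sigma>\<^sup>2 * (\<Sum>k=1..K. (lam \<alpha> k)\<^sup>2 / \<alpha> k * (norm (f k (y (K - k))))\<^sup>2)
      + 2 * \<sigma> * (\<Sum>k=1..K. lam \<alpha> k / sqrt (\<alpha> k) * (f k (y (K - k)) \<bullet> eps_noise \<sigma> K \<alpha> f k y))"
    unfolding T_def by (simp add: sum.distrib sum_distrib_left)
  finally show ?thesis .
qed

locale chain =
  fixes \<sigma> :: real and K :: nat and \<alpha> :: "nat \<Rightarrow> real" and f :: "nat \<Rightarrow> 'a::euclidean_space \<Rightarrow> 'a"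
  assumes sigma_pos: "0 < \<sigma>" and alpha_range: "\<And>k. k \<in> {1..K} \<Longrightarrow> 0 < \<alpha> k \<and> \<alpha> k < 1"
    and f_meas: "\<And>k. k \<in> {1..K} \<Longrightarrow> f k \<in> borel_measurable borel"
begin

definition sj :: "nat \<Rightarrow> real" where "sj j = \<sigma> * sqrt (\<alpha> (K - j))"
definition mj :: "nat \<Rightarrow> 'a \<Rightarrow> 'a" where
  "mj j = (if j < K then (\<lambda>x. sqrt (1 - \<alpha> (K - j)) *\<^sub>R x + (2 * \<sigma>\<^sup>2 * lam \<alpha> (K - j)) *\<^sub>R f (K - j) x) else (\<lambda>x. 0))"
definition kern :: "nat \<Rightarrow> 'a \<Rightarrow> 'a \<Rightarrow> real" where "kern j x z = gauss_dens ((sj j)\<^sup>2) (mj j x) z"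
definition qn :: "nat \<Rightarrow> (nat \<Rightarrow> 'a) \<Rightarrow> real" where
  "qn n y = gauss_dens (\<sigma>\<^sup>2) 0 (y 0) * (\<Prod>k<n. kern k (y k) (y (Suc k)))"
definition en :: "nat \<Rightarrow> (nat \<Rightarrow> 'a) \<Rightarrow> 'a" where "en j y = (1 / sj j) *\<^sub>R (y (Suc j) - mj j (y j))"

abbreviation "PL (I::nat set) \<equiv> PiM I (\<lambda>_. (lborel :: 'a measure))"

lemma sj_pos: "j < K \<Longrightarrow> 0 < sj j"
  using alpha_range[of "K - j"] sigma_pos by (auto simp: sj_def)

lemma mj_meas[measurable]: "mj j \<in> borel_measurable borel"
proof (cases "j < K")
  case True
  then have [measurable]: "f (K - j) \<in> borel_measurable borel" by (intro f_meas) auto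
  show ?thesis using True unfolding mj_def by simp
qed (simp add: mj_def)

lemma qn_nonneg: "0 \<le> qn n y"
  by (auto simp: qn_def kern_def intro!: mult_nonneg_nonneg prod_nonneg gauss_dens_nonneg')

lemma qn_meas[measurable]: "qn n \<in> borel_measurable (PL {0..m})" if "n \<le> m"
proof -
  have comp[measurable]: "(\<lambda>y. y k) \<in> borel_measurable (PL {0..m})" if "k \<le> m" for k
  proof -
    have "k \<in> {0..m}" using that by auto
    then show ?thesis by measurable
  qed
  show ?thesis unfolding qn_def kern_def apply measurable using that by (auto intro!: comp)
qed

lemma q_dens_eq: "q_dens \<sigma> K \<alpha> f = qn K"
proof
  fix y :: "nat \<Rightarrow> 'a"
  show "q_dens \<sigma> K \<alpha> f y = qn K y"
    unfolding q_dens_def qn_def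
  proof (intro arg_cong2[where f="(*)"] refl prod.cong)
    fix k assume k: "k \<in> {..<K}"
    then have a: "0 < \<alpha> (K - k)" using alpha_range[of "K - k"] by auto
    have "(sj k)\<^sup>2 = \<sigma>\<^sup>2 * \<alpha> (K - k)" using a by (simp add: sj_def power_mult_distrib)
    then show "gauss_dens (\<sigma>\<^sup>2 * \<alpha> (K - k)) (sqrt (1 - \<alpha> (K - k)) *\<^sub>R y k + (2 * \<sigma>\<^sup>2 * lam \<alpha> (K - k)) *\<^sub>R f (K - k) (y k)) (y (Suc k))
        = kern k (y k) (y (Suc k))"
      using k by (simp add: kern_def mj_def)
  qed
qed

lemma eps_eq: "j < K \<Longrightarrow> eps_noise \<sigma> K \<alpha> f (K - j) y = en j y"
  unfolding eps_noise_def en_def mj_def sj_def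
  by (simp add: algebra_simps Suc_diff_le)

lemma comp_meas[measurable]: "k \<in> I \<Longrightarrow> (\<lambda>y. y k) \<in> borel_measurable (PL I)"
  by measurable

lemma en_meas_gen: "j \<in> I \<Longrightarrow> Suc j \<in> I \<Longrightarrow> en j \<in> borel_measurable (PL I)"
  unfolding en_def by measurable

lemma en_meas: "en n \<in> borel_measurable (PL {0..Suc n})"
  by (rule en_meas_gen) auto

lemma L1:
  assumes n: "n < K"
    and Fm: "(\<lambda>p. F (fst p) (snd p)) \<in> borel_measurable (PL {0..Suc n} \<Otimes>\<^sub>M lborel)"
    and Finv: "\<And>y z e. F (y(Suc n := z)) e = F y e"
  shows "(\<integral>\<^sup>+ y. F y (en n y) * ennreal (qn (Suc n) y) \<partial>PL {0..Suc n})
       = (\<integral>\<^sup>+ y. (\<integral>\<^sup>+ e. F y e \<partial>std_gauss) * ennreal (qn n y) \<partial>PL {0..n})"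
proof -
  interpret product_sigma_finite "\<lambda>_::nat. (lborel::'a measure)" by (rule psf)
  have ins: "{0..Suc n} = insert (Suc n) {0..n}" by auto
  have "(\<lambda>y. (y, en n y)) \<in> measurable (PL {0..Suc n}) (PL {0..Suc n} \<Otimes>\<^sub>M lborel)"
    by (intro measurable_Pair measurable_ident_sets) (auto simp: en_meas)
  from measurable_compose[OF this Fm]
  have Fe: "(\<lambda>y. F y (en n y)) \<in> borel_measurable (PL {0..Suc n})" by simp
  have gm: "(\<lambda>y. F y (en n y) * ennreal (qn (Suc n) y)) \<in> borel_measurable (PL (insert (Suc n) {0..n}))"
    unfolding ins[symmetric] by (intro borel_measurable_times_ennreal Fe measurable_compose[OF qn_meas[of "Suc n" "Suc n"]]) auto
  have "(\<integral>\<^sup>+ y. F y (en n y) * ennreal (qn (Suc n) y) \<partial>PL {0..Suc n})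
      = (\<integral>\<^sup>+ y. F y (en n y) * ennreal (qn (Suc n) y) \<partial>PL (insert (Suc n) {0..n}))"
    by (simp only: ins)
  also have "\<dots> = (\<integral>\<^sup>+ x. (\<integral>\<^sup>+ z. F (x(Suc n := z)) (en n (x(Suc n := z))) * ennreal (qn (Suc n) (x(Suc n := z))) \<partial>lborel) \<partial>PL {0..n})"
    by (rule product_nn_integral_insert) (use gm in auto)
  also have "\<dots> = (\<integral>\<^sup>+ y. (\<integral>\<^sup>+ e. F y e \<partial>std_gauss) * ennreal (qn n y) \<partial>PL {0..n})"
  proof (intro nn_integral_cong)
    fix x assume x: "x \<in> space (PL {0..n})"
    have x0: "x(Suc n := 0) \<in> space (PL {0..Suc n})"
      using x by (auto simp: space_PiM PiE_def extensional_def)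
    have Fx: "F x \<in> borel_measurable borel"
    proof -
      have "(\<lambda>e. (\<lambda>p. F (fst p) (snd p)) (x(Suc n := 0), e)) \<in> borel_measurable lborel"
        by (rule measurable_Pair2[OF Fm x0])
      then show ?thesis by (simp add: Finv[of x 0])
    qed
    have s: "sj n \<noteq> 0" using sj_pos[OF n] by simp
    have en_upd: "en n (x(Suc n := z)) = (1 / sj n) *\<^sub>R (z - mj n (x n))" for z
      by (simp add: en_def)
    have qn_upd: "qn (Suc n) (x(Suc n := z)) = qn n x * gauss_dens ((sj n)\<^sup>2) (mj n (x n)) z" for z
    proof -
      have "(\<Prod>k<n. kern k ((x(Suc n := z)) k) ((x(Suc n := z)) (Suc k))) = (\<Prod>k<n. kern k (x k) (x (Suc k)))"
        by (intro prod.cong) auto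
      then show ?thesis by (simp add: qn_def kern_def mult_ac)
    qed
    have "(\<integral>\<^sup>+ z. F (x(Suc n := z)) (en n (x(Suc n := z))) * ennreal (qn (Suc n) (x(Suc n := z))) \<partial>lborel)
        = (\<integral>\<^sup>+ z. ennreal (qn n x) * (F x ((1 / sj n) *\<^sub>R (z - mj n (x n))) * ennreal (gauss_dens ((sj n)\<^sup>2) (mj n (x n)) z)) \<partial>lborel)"
    proof (intro nn_integral_cong)
      fix z :: 'a
      have "ennreal (qn (Suc n) (x(Suc n := z))) = ennreal (qn n x) * ennreal (gauss_dens ((sj n)\<^sup>2) (mj n (x n)) z)"
        unfolding qn_upd by (rule ennreal_mult) (auto simp: qn_nonneg gauss_dens_nonneg')
      then show "F (x(Suc n := z)) (en n (x(Suc n := z))) * ennreal (qn (Suc n) (x(Suc n := z)))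
        = ennreal (qn n x) * (F x ((1 / sj n) *\<^sub>R (z - mj n (x n))) * ennreal (gauss_dens ((sj n)\<^sup>2) (mj n (x n)) z))"
        by (simp only: Finv en_upd ac_simps)
    qed
    also have "\<dots> = ennreal (qn n x) * (\<integral>\<^sup>+ z. F x ((1 / sj n) *\<^sub>R (z - mj n (x n))) * ennreal (gauss_dens ((sj n)\<^sup>2) (mj n (x n)) z) \<partial>lborel)"
      by (rule nn_integral_cmult) (intro borel_measurable_times_ennreal measurable_compose[OF _ Fx] measurable_compose[OF _ measurable_ennreal] borel_measurable_scaleR borel_measurable_diff gauss_dens_meas measurable_const measurable_ident_sets; simp)
    also have "\<dots> = ennreal (qn n x) * (\<integral>\<^sup>+ e. F x e \<partial>std_gauss)"
      by (simp add: gauss_kernel[OF s Fx])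
    finally show "(\<integral>\<^sup>+ z. F (x(Suc n := z)) (en n (x(Suc n := z))) * ennreal (qn (Suc n) (x(Suc n := z))) \<partial>lborel)
        = (\<integral>\<^sup>+ e. F x e \<partial>std_gauss) * ennreal (qn n x)" by (simp add: mult.commute)
  qed
  finally show ?thesis .
qed

lemma sg1: "emeasure (std_gauss::'a measure) UNIV = 1"
  using prob_space.emeasure_space_1[OF prob_space_std_gauss] by simp

lemma qn0_total: "(\<integral>\<^sup>+ y. ennreal (qn 0 y) \<partial>PL {0..0}) = 1"
proof -
  interpret product_sigma_finite "\<lambda>_::nat. (lborel::'a measure)" by (rule psf)
  have "(\<integral>\<^sup>+ y. ennreal (qn 0 y) \<partial>PL {0..0}) = (\<integral>\<^sup>+ y. ennreal (gauss_dens (\<sigma>\<^sup>2) 0 (y 0)) \<partial>PL {0})"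
    by (simp add: qn_def)
  also have "\<dots> = (\<integral>\<^sup>+ x. ennreal (gauss_dens (\<sigma>\<^sup>2) 0 (x::'a)) \<partial>lborel)"
    using product_sigma_finite.product_nn_integral_singleton[OF psf, where f="\<lambda>x. ennreal (gauss_dens (\<sigma>\<^sup>2) 0 x)" and i=0]
    by simp
  also have "\<dots> = 1" using sigma_pos by (simp add: gauss_total)
  finally show ?thesis .
qed

lemma marg:
  assumes mn: "m \<le> n" and nK: "n \<le> K"
    and Wm: "\<And>k. m \<le> k \<Longrightarrow> W \<in> borel_measurable (PL {0..k})"
    and Winv: "\<And>y i z. m < i \<Longrightarrow> W (y(i := z)) = W y"
  shows "(\<integral>\<^sup>+ y. W y * ennreal (qn n y) \<partial>PL {0..n}) = (\<integral>\<^sup>+ y. W y * ennreal (qn m y) \<partial>PL {0..m})"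
  using mn nK
proof (induction n)
  case 0
  then show ?case by simp
next
  case (Suc n)
  show ?case
  proof (cases "m = Suc n")
    case True then show ?thesis by simp
  next
    case False
    then have mn': "m \<le> n" and nK': "n < K" using Suc.prems by auto
    have "(\<integral>\<^sup>+ y. W y * ennreal (qn (Suc n) y) \<partial>PL {0..Suc n})
        = (\<integral>\<^sup>+ y. (\<integral>\<^sup>+ e. W y \<partial>(std_gauss::'a measure)) * ennreal (qn n y) \<partial>PL {0..n})"
    proof (rule L1[OF nK', where F="\<lambda>y e. W y"])
      show "(\<lambda>p. W (fst p)) \<in> borel_measurable (PL {0..Suc n} \<Otimes>\<^sub>M lborel)"
        by (rule measurable_compose[OF measurable_fst Wm]) (use mn' in simp)
      show "\<And>y z. W (y(Suc n := z)) = W y" by (rule Winv) (use mn' in simp)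
    qed
    also have "\<dots> = (\<integral>\<^sup>+ y. W y * ennreal (qn n y) \<partial>PL {0..n})"
      using sg1 by simp
    also have "\<dots> = (\<integral>\<^sup>+ y. W y * ennreal (qn m y) \<partial>PL {0..m})"
      by (rule Suc.IH) (use mn' nK' in auto)
    finally show ?thesis .
  qed
qed

lemma prodlem:
  assumes nK: "n \<le> K" and G: "\<And>j. G j \<in> borel_measurable borel"
  shows "(\<integral>\<^sup>+ y. (\<Prod>j<n. G j (en j y)) * ennreal (qn n y) \<partial>PL {0..n}) = (\<Prod>j<n. (\<integral>\<^sup>+ e. G j e \<partial>std_gauss))"
  using nK
proof (induction n)
  case 0
  then show ?case using qn0_total by simp
next
  case (Suc n)
  then have nK': "n < K" by simp
  have Pm: "(\<lambda>y. \<Prod>j<n. G j (en j y)) \<in> borel_measurable (PL I)" if "{0..n} \<subseteq> I" for I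
    by (intro borel_measurable_prod_ennreal measurable_compose[OF en_meas_gen G]) (use that in auto)
  have "(\<integral>\<^sup>+ y. (\<Prod>j<Suc n. G j (en j y)) * ennreal (qn (Suc n) y) \<partial>PL {0..Suc n})
      = (\<integral>\<^sup>+ y. ((\<lambda>y e. (\<Prod>j<n. G j (en j y)) * G n e) y (en n y)) * ennreal (qn (Suc n) y) \<partial>PL {0..Suc n})"
    by (simp add: mult.commute)
  also have "\<dots> = (\<integral>\<^sup>+ y. (\<integral>\<^sup>+ e. (\<Prod>j<n. G j (en j y)) * G n e \<partial>std_gauss) * ennreal (qn n y) \<partial>PL {0..n})"
  proof (rule L1[OF nK'])
    show "(\<lambda>p. (\<Prod>j<n. G j (en j (fst p))) * G n (snd p)) \<in> borel_measurable (PL {0..Suc n} \<Otimes>\<^sub>M lborel)"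
      by (intro borel_measurable_times_ennreal measurable_compose[OF measurable_fst Pm]
          measurable_compose[OF measurable_snd G[folded measurable_lborel2]]) auto
    show "(\<Prod>j<n. G j (en j (y(Suc n := z)))) * G n e = (\<Prod>j<n. G j (en j y)) * G n e" for y z e
      by (intro arg_cong2[where f="(*)"] refl prod.cong) (auto simp: en_def)
  qed
  also have "\<dots> = (\<integral>\<^sup>+ y. (\<integral>\<^sup>+ e. G n e \<partial>std_gauss) * ((\<Prod>j<n. G j (en j y)) * ennreal (qn n y)) \<partial>PL {0..n})"
    by (intro nn_integral_cong, subst nn_integral_cmult) (auto simp: G mult_ac)
  also have "\<dots> = (\<integral>\<^sup>+ e. G n e \<partial>std_gauss) * (\<integral>\<^sup>+ y. (\<Prod>j<n. G j (en j y)) * ennreal (qn n y) \<partial>PL {0..n})"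
    by (rule nn_integral_cmult) (intro borel_measurable_times_ennreal Pm measurable_compose[OF qn_meas[of n n]]; simp)
  also have "\<dots> = (\<Prod>j<Suc n. (\<integral>\<^sup>+ e. G j e \<partial>std_gauss))"
    using Suc.IH nK' by (simp add: mult.commute)
  finally show ?case .
qed

lemma P2:
  assumes j: "j < K" and hm: "(\<lambda>p. h (fst p) (snd p)) \<in> borel_measurable (lborel \<Otimes>\<^sub>M lborel)"
  shows "(\<integral>\<^sup>+ y. h (y j) (en j y) * ennreal (qn K y) \<partial>PL {0..K})
       = (\<integral>\<^sup>+ y. (\<integral>\<^sup>+ e. h (y j) e \<partial>std_gauss) * ennreal (qn j y) \<partial>PL {0..j})"
proof -
  have "(\<integral>\<^sup>+ y. h (y j) (en j y) * ennreal (qn K y) \<partial>PL {0..K})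
      = (\<integral>\<^sup>+ y. h (y j) (en j y) * ennreal (qn (Suc j) y) \<partial>PL {0..Suc j})"
  proof (rule marg)
    show "Suc j \<le> K" "K \<le> K" using j by auto
    show "(\<lambda>y. h (y j) (en j y)) \<in> borel_measurable (PL {0..k})" if "Suc j \<le> k" for k
    proof -
      have "(\<lambda>y. (y j, en j y)) \<in> measurable (PL {0..k}) (lborel \<Otimes>\<^sub>M lborel)"
      proof (intro measurable_Pair)
        show "(\<lambda>y. y j) \<in> measurable (PL {0..k}) lborel" using that by (simp add: comp_meas)
        show "en j \<in> measurable (PL {0..k}) lborel" using that by (simp add: en_meas_gen)
      qed
      from measurable_compose[OF this hm] show ?thesis by simp
    qed
    show "h ((y(i := z)) j) (en j (y(i := z))) = h (y j) (en j y)" if "Suc j < i" for y i z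
      using that by (simp add: en_def)
  qed
  also have "\<dots> = (\<integral>\<^sup>+ y. (\<integral>\<^sup>+ e. h (y j) e \<partial>std_gauss) * ennreal (qn j y) \<partial>PL {0..j})"
  proof (rule L1[OF j, where F="\<lambda>y e. h (y j) e"])
    have "(\<lambda>p. (fst p j, snd p)) \<in> measurable (PL {0..Suc j} \<Otimes>\<^sub>M lborel) (lborel \<Otimes>\<^sub>M lborel)"
      by (intro measurable_Pair measurable_compose[OF measurable_fst] measurable_snd)
         (auto intro!: measurable_component_singleton)
    from measurable_compose[OF this hm]
    show "(\<lambda>p. h (fst p j) (snd p)) \<in> borel_measurable (PL {0..Suc j} \<Otimes>\<^sub>M lborel)" by simp
    show "h ((y(Suc j := z)) j) e = h (y j) e" for y z e by simp
  qed
  finally show ?thesis .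
qed

lemma qn_total: "n \<le> K \<Longrightarrow> (\<integral>\<^sup>+ y. ennreal (qn n y) \<partial>PL {0..n}) = 1"
  using marg[of 0 n "\<lambda>_. 1"] qn0_total by simp

end

lemma indicator_PiE_prod:
  assumes "finite I" "x \<in> extensional I"
  shows "(indicator (PiE I A) x :: ennreal) = (\<Prod>i\<in>I. indicator (A i) (x i))"
proof (cases "x \<in> PiE I A")
  case True
  then show ?thesis by (auto simp: PiE_def indicator_def intro!: prod.neutral)
next
  case False
  then obtain i where i: "i \<in> I" "x i \<notin> A i" using assms(2) by (auto simp: PiE_def Pi_def)
  then have "(\<Prod>i\<in>I. (indicator (A i) (x i) :: ennreal)) = 0"
    using assms(1) i by (intro prod_zero) (auto intro!: bexI[of _ i])
  with False show ?thesis by simp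
qed

context chain
begin

lemma psg: "product_sigma_finite (\<lambda>_::nat. (std_gauss::'a measure))"
  unfolding product_sigma_finite_def using prob_space_imp_sigma_finite[OF prob_space_std_gauss] by simp

lemma eps_meas: "k \<in> {1..K} \<Longrightarrow> eps_noise \<sigma> K \<alpha> f k \<in> borel_measurable (PL {0..K})"
proof -
  assume k: "k \<in> {1..K}"
  have "eps_noise \<sigma> K \<alpha> f k = en (K - k)"
    using eps_eq[of "K - k"] k by (auto simp: fun_eq_iff)
  moreover have "en (K - k) \<in> borel_measurable (PL {0..K})"
    using k by (intro en_meas_gen) auto
  ultimately show ?thesis by simp
qed

lemma eps_eq2: "k \<in> {1..K} \<Longrightarrow> en (K - k) y = eps_noise \<sigma> K \<alpha> f k y"
  using eps_eq[of "K - k" y] by auto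

lemma part1:
  "distr (density (PL {0..K}) (\<lambda>y. ennreal (qn K y))) (PiM {1..K} (\<lambda>_. lborel))
      (\<lambda>y. \<lambda>k\<in>{1..K}. eps_noise \<sigma> K \<alpha> f k y)
   = PiM {1..K} (\<lambda>_. std_gauss)"
proof -
  let ?Q = "density (PL {0..K}) (\<lambda>y. ennreal (qn K y))"
  let ?E = "\<lambda>y. \<lambda>k\<in>{1..K}. eps_noise \<sigma> K \<alpha> f k y"
  have Em: "?E \<in> measurable (PL {0..K}) (PiM {1..K} (\<lambda>_. (lborel::'a measure)))"
    by (intro measurable_restrict) (simp add: eps_meas)
  then have EmQ: "?E \<in> measurable ?Q (PiM {1..K} (\<lambda>_. (lborel::'a measure)))"
    by (subst measurable_cong_sets[OF sets_density refl]) (rule Em)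
  show ?thesis
  proof (rule product_sigma_finite.PiM_eqI[OF psg])
    show "finite {1..K}" by simp
    show "sets (distr ?Q (PiM {1..K} (\<lambda>_. lborel)) ?E) = sets (PiM {1..K} (\<lambda>_. std_gauss))"
      unfolding sets_distr by (rule sets_PiM_cong) auto
    fix A assume A: "\<And>i. i \<in> {1..K} \<Longrightarrow> A i \<in> sets (std_gauss::'a measure)"
    define G where "G j = (if j < K then indicator (A (K - j)) else (\<lambda>_::'a. 1::ennreal))" for j
    have Gm: "G j \<in> borel_measurable borel" for j
      using A[of "K - j"] by (auto simp: G_def)
    have PA: "PiE {1..K} A \<in> sets (PiM {1..K} (\<lambda>_. (lborel::'a measure)))"
      using A by (intro sets_PiM_I_finite) auto
    have "emeasure (distr ?Q (PiM {1..K} (\<lambda>_. lborel)) ?E) (PiE {1..K} A)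
        = emeasure ?Q (?E -` PiE {1..K} A \<inter> space ?Q)"
      by (rule emeasure_distr[OF EmQ PA])
    also have "\<dots> = emeasure ?Q (?E -` PiE {1..K} A \<inter> space (PL {0..K}))"
      by (simp only: space_density)
    also have "\<dots> = (\<integral>\<^sup>+ y. ennreal (qn K y) * indicator (?E -` PiE {1..K} A \<inter> space (PL {0..K})) y \<partial>PL {0..K})"
    proof (rule emeasure_density)
      show "(\<lambda>y. ennreal (qn K y)) \<in> borel_measurable (PL {0..K})"
        using qn_meas[of K K] by simp
      show "?E -` PiE {1..K} A \<inter> space (PL {0..K}) \<in> sets (PL {0..K})"
        by (rule measurable_sets[OF Em PA])
    qed
    also have "\<dots> = (\<integral>\<^sup>+ y. (\<Prod>j<K. G j (en j y)) * ennreal (qn K y) \<partial>PL {0..K})"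
    proof (intro nn_integral_cong)
      fix y assume y: "y \<in> space (PL {0..K})"
      have "indicator (?E -` PiE {1..K} A \<inter> space (PL {0..K})) y = (indicator (PiE {1..K} A) (?E y) :: ennreal)"
        using y by (simp add: indicator_def)
      also have "\<dots> = (\<Prod>k\<in>{1..K}. indicator (A k) (?E y k))"
        by (rule indicator_PiE_prod) auto
      also have "\<dots> = (\<Prod>k\<in>{1..K}. indicator (A k) (eps_noise \<sigma> K \<alpha> f k y))"
        by (intro prod.cong) auto
      also have "\<dots> = (\<Prod>j<K. G j (en j y))"
        by (rule prod.reindex_bij_witness[of _ "\<lambda>j. K - j" "\<lambda>k. K - k"]) (auto simp: G_def eps_eq2)
      finally show "ennreal (qn K y) * indicator (?E -` PiE {1..K} A \<inter> space (PL {0..K})) y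
          = (\<Prod>j<K. G j (en j y)) * ennreal (qn K y)" by (simp add: mult.commute)
    qed
    also have "\<dots> = (\<Prod>j<K. (\<integral>\<^sup>+ e. G j e \<partial>std_gauss))"
      by (rule prodlem) (auto simp: Gm)
    also have "\<dots> = (\<Prod>j<K. emeasure std_gauss (A (K - j)))"
      by (intro prod.cong refl) (use A in \<open>auto simp: G_def\<close>)
    also have "\<dots> = (\<Prod>k\<in>{1..K}. emeasure std_gauss (A k))"
      by (rule prod.reindex_bij_witness[of _ "\<lambda>k. K - k" "\<lambda>j. K - j"]) auto
    finally show "emeasure (distr ?Q (PiM {1..K} (\<lambda>_. lborel)) ?E) (PiE {1..K} A) = (\<Prod>k\<in>{1..K}. emeasure std_gauss (A k))" .
  qed
qed

end

lemma aux_sq: "0 \<le> (x::real) \<Longrightarrow> 0 \<le> y \<Longrightarrow> x * y \<le> x\<^sup>2 + y\<^sup>2"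
proof (cases "x \<le> y")
  case True
  assume "0 \<le> x" "0 \<le> y"
  then have "x * y \<le> y * y" using True by (intro mult_right_mono) auto
  moreover have "0 \<le> x * x" by simp
  ultimately show ?thesis unfolding power2_eq_square by linarith
next
  case False
  assume "0 \<le> x" "0 \<le> y"
  then have "x * y \<le> x * x" using False by (intro mult_left_mono) auto
  moreover have "0 \<le> y * y" by simp
  ultimately show ?thesis unfolding power2_eq_square by linarith
qed

context chain
begin

abbreviation "QQ \<equiv> density (PL {0..K}) (\<lambda>y. ennreal (qn K y))"

lemma qnK_meas: "(\<lambda>y. ennreal (qn K y)) \<in> borel_measurable (PL {0..K})"
  using qn_meas[of K K] by simp

lemma nn_QQ: "g \<in> borel_measurable (PL {0..K}) \<Longrightarrow> (\<integral>\<^sup>+ y. g y \<partial>QQ) = (\<integral>\<^sup>+ y. g y * ennreal (qn K y) \<partial>PL {0..K})"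
  by (subst nn_integral_density) (auto simp: qnK_meas mult.commute)

lemma fk_meas: "k \<in> {1..K} \<Longrightarrow> (\<lambda>y. f k (y (K - k))) \<in> borel_measurable (PL {0..K})"
  by (intro measurable_compose[OF comp_meas f_meas]) auto

lemma eps_sq_nn:
  assumes k: "k \<in> {1..K}"
  shows "(\<integral>\<^sup>+ y. ennreal ((norm (eps_noise \<sigma> K \<alpha> f k y))\<^sup>2) \<partial>QQ) < \<infinity>"
proof -
  define j where "j = K - k"
  have j: "j < K" using k by (auto simp: j_def)
  have e: "eps_noise \<sigma> K \<alpha> f k y = en j y" for y using eps_eq2[OF k] by (simp add: j_def)
  have "(\<integral>\<^sup>+ y. ennreal ((norm (eps_noise \<sigma> K \<alpha> f k y))\<^sup>2) \<partial>QQ)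
      = (\<integral>\<^sup>+ y. (\<lambda>x e. ennreal ((norm e)\<^sup>2)) (y j) (en j y) * ennreal (qn K y) \<partial>PL {0..K})"
  proof -
    have [measurable]: "en j \<in> borel_measurable (PL {0..K})" using j by (intro en_meas_gen) auto
    have m: "(\<lambda>y. ennreal ((norm (en j y))\<^sup>2)) \<in> borel_measurable (PL {0..K})" by measurable
    show ?thesis unfolding e by (rule nn_QQ[OF m])
  qed
  also have "\<dots> = (\<integral>\<^sup>+ y. (\<integral>\<^sup>+ e. ennreal ((norm (e::'a))\<^sup>2) \<partial>std_gauss) * ennreal (qn j y) \<partial>PL {0..j})"
    by (rule P2[OF j, where h="\<lambda>x e. ennreal ((norm e)\<^sup>2)"]) measurable
  also have "\<dots> = (\<integral>\<^sup>+ e. ennreal ((norm (e::'a))\<^sup>2) \<partial>std_gauss) * (\<integral>\<^sup>+ y. ennreal (qn j y) \<partial>PL {0..j})"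
    by (rule nn_integral_cmult) (use qn_meas[of j j] in simp)
  also have "\<dots> = (\<integral>\<^sup>+ e. ennreal ((norm (e::'a))\<^sup>2) \<partial>std_gauss)"
    using qn_total[of j] j by simp
  also have "\<dots> < \<infinity>" by (rule std_gauss_moment2)
  finally show ?thesis .
qed

lemma eps_sq_int:
  assumes k: "k \<in> {1..K}"
  shows "integrable QQ (\<lambda>y. (norm (eps_noise \<sigma> K \<alpha> f k y))\<^sup>2)"
proof (rule integrableI_bounded)
  show "(\<lambda>y. (norm (eps_noise \<sigma> K \<alpha> f k y))\<^sup>2) \<in> borel_measurable QQ"
    using eps_meas[OF k] by simp
  show "(\<integral>\<^sup>+ y. ennreal (norm ((norm (eps_noise \<sigma> K \<alpha> f k y))\<^sup>2)) \<partial>QQ) < \<infinity>"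
    using eps_sq_nn[OF k] by simp
qed

lemma cross_int:
  assumes k: "k \<in> {1..K}" and fint: "integrable QQ (\<lambda>y. (norm (f k (y (K - k))))\<^sup>2)"
  shows "integrable QQ (\<lambda>y. f k (y (K - k)) \<bullet> eps_noise \<sigma> K \<alpha> f k y)"
proof (rule Bochner_Integration.integrable_bound[OF Bochner_Integration.integrable_add[OF fint eps_sq_int[OF k]]])
  show "(\<lambda>y. f k (y (K - k)) \<bullet> eps_noise \<sigma> K \<alpha> f k y) \<in> borel_measurable QQ"
    using fk_meas[OF k] eps_meas[OF k] by simp
  show "AE y in QQ. norm (f k (y (K - k)) \<bullet> eps_noise \<sigma> K \<alpha> f k y)
      \<le> norm ((norm (f k (y (K - k))))\<^sup>2 + (norm (eps_noise \<sigma> K \<alpha> f k y))\<^sup>2)"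
  proof (intro AE_I2)
    fix y
    define a where "a = f k (y (K - k))"
    define b where "b = eps_noise \<sigma> K \<alpha> f k y"
    have "\<bar>a \<bullet> b\<bar> \<le> norm a * norm b" by (rule Cauchy_Schwarz_ineq2)
    also have "\<dots> \<le> (norm a)\<^sup>2 + (norm b)\<^sup>2"
      by (rule aux_sq) simp_all
    finally show "norm (f k (y (K - k)) \<bullet> eps_noise \<sigma> K \<alpha> f k y)
      \<le> norm ((norm (f k (y (K - k))))\<^sup>2 + (norm (eps_noise \<sigma> K \<alpha> f k y))\<^sup>2)"
      unfolding a_def[symmetric] b_def[symmetric] by simp
  qed
qed

lemma cross_nn:
  assumes k: "k \<in> {1..K}"
  shows "(\<integral>\<^sup>+ y. ennreal (c * (f k (y (K - k)) \<bullet> eps_noise \<sigma> K \<alpha> f k y)) \<partial>QQ)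
    = (\<integral>\<^sup>+ y. (\<integral>\<^sup>+ e. ennreal (c * (f k (y (K - k)) \<bullet> e)) \<partial>std_gauss) * ennreal (qn (K - k) y) \<partial>PL {0..K - k})"
proof -
  define j where "j = K - k"
  have j: "j < K" using k by (auto simp: j_def)
  have e: "eps_noise \<sigma> K \<alpha> f k y = en j y" for y using eps_eq2[OF k] by (simp add: j_def)
  have [measurable]: "f k \<in> borel_measurable borel" using f_meas[OF k] .
  have [measurable]: "en j \<in> borel_measurable (PL {0..K})" using j by (intro en_meas_gen) auto
  have [measurable]: "(\<lambda>y. y j) \<in> borel_measurable (PL {0..K})" using j by (intro comp_meas) auto
  have m: "(\<lambda>y. ennreal (c * (f k (y j) \<bullet> en j y))) \<in> borel_measurable (PL {0..K})" by measurable
  have "(\<integral>\<^sup>+ y. ennreal (c * (f k (y (K - k)) \<bullet> eps_noise \<sigma> K \<alpha> f k y)) \<partial>QQ)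
      = (\<integral>\<^sup>+ y. ennreal (c * (f k (y j) \<bullet> en j y)) * ennreal (qn K y) \<partial>PL {0..K})"
    unfolding e j_def[symmetric] by (rule nn_QQ[OF m])
  also have "\<dots> = (\<integral>\<^sup>+ y. (\<integral>\<^sup>+ e. ennreal (c * (f k (y j) \<bullet> e)) \<partial>std_gauss) * ennreal (qn j y) \<partial>PL {0..j})"
    by (rule P2[OF j, where h="\<lambda>x e. ennreal (c * (f k x \<bullet> e))"]) measurable
  finally show ?thesis unfolding j_def .
qed

lemma cross_zero:
  assumes k: "k \<in> {1..K}" and fint: "integrable QQ (\<lambda>y. (norm (f k (y (K - k))))\<^sup>2)"
  shows "integral\<^sup>L QQ (\<lambda>y. f k (y (K - k)) \<bullet> eps_noise \<sigma> K \<alpha> f k y) = 0"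
proof -
  have [measurable]: "f k \<in> borel_measurable borel" using f_meas[OF k] .
  have inner_eq: "(\<integral>\<^sup>+ e. ennreal (1 * (F \<bullet> e)) \<partial>std_gauss) = (\<integral>\<^sup>+ e. ennreal (-1 * (F \<bullet> (e::'a))) \<partial>std_gauss)" for F
    using std_gauss_sym[of "\<lambda>e. ennreal (-1 * (F \<bullet> e))"] by simp
  have "(\<integral>\<^sup>+ y. ennreal (1 * (f k (y (K - k)) \<bullet> eps_noise \<sigma> K \<alpha> f k y)) \<partial>QQ)
      = (\<integral>\<^sup>+ y. ennreal (-1 * (f k (y (K - k)) \<bullet> eps_noise \<sigma> K \<alpha> f k y)) \<partial>QQ)"
    unfolding cross_nn[OF k] inner_eq ..
  then show ?thesis
    by (subst real_lebesgue_integral_def[OF cross_int[OF k fint]]) simp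
qed

end

context chain
begin

lemma AE_pos:
  fixes \<pi> :: "'a \<Rightarrow> real"
  assumes pm[measurable]: "\<pi> \<in> borel_measurable borel" and pp: "AE x in lborel. 0 < \<pi> x"
  shows "AE y in PL {0..K}. 0 < \<pi> (y K)"
proof -
  define S where "S = {x::'a. \<not> 0 < \<pi> x}"
  have S: "S \<in> sets lborel" unfolding S_def by measurable
  have S0: "emeasure lborel S = 0"
    using AE_iff_measurable[OF S, of "\<lambda>x. 0 < \<pi> x"] pp by (simp add: S_def)
  have [measurable]: "(\<lambda>y. y K) \<in> borel_measurable (PL {0..K})" by (intro comp_meas) auto
  have N: "{y \<in> space (PL {0..K}). \<not> 0 < \<pi> (y K)} \<in> sets (PL {0..K})" by measurable
  interpret product_sigma_finite "\<lambda>_::nat. (lborel::'a measure)" by (rule psf)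
  have ins: "{0..K} = insert K {0..<K}" by auto
  have "emeasure (PL {0..K}) {y \<in> space (PL {0..K}). \<not> 0 < \<pi> (y K)}
      = (\<integral>\<^sup>+ y. indicator {y \<in> space (PL {0..K}). \<not> 0 < \<pi> (y K)} y \<partial>PL {0..K})"
    using N by simp
  also have "\<dots> = (\<integral>\<^sup>+ y. indicator S (y K) \<partial>PL {0..K})"
    by (intro nn_integral_cong) (auto simp: indicator_def S_def)
  also have "\<dots> = (\<integral>\<^sup>+ y. indicator S (y K) \<partial>PL (insert K {0..<K}))"
    by (simp only: ins)
  also have "\<dots> = (\<integral>\<^sup>+ x. (\<integral>\<^sup>+ z. indicator S ((x(K := z)) K) \<partial>lborel) \<partial>PL {0..<K})"
  proof (rule product_nn_integral_insert)
    show "(\<lambda>y. indicator S (y K) :: ennreal) \<in> borel_measurable (PL (insert K {0..<K}))"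
      unfolding ins[symmetric] using S by measurable
  qed auto
  also have "\<dots> = 0" using S S0 by simp
  finally show ?thesis by (subst AE_iff_measurable[OF N refl])
qed

lemma pref_meas: "pref_dens \<sigma> K \<alpha> \<in> borel_measurable (PL {0..K})"
proof -
  have comp[measurable]: "(\<lambda>y. y k) \<in> borel_measurable (PL {0..K})" if "k \<le> K" for k
    using that by (intro comp_meas) auto
  show ?thesis unfolding pref_dens_def by measurable
qed

lemma qn_pos: "0 < qn K y"
proof -
  have "\<And>j. j < K \<Longrightarrow> sj j \<noteq> 0" using sj_pos by force
  then show ?thesis unfolding qn_def kern_def using sigma_pos
    by (intro mult_pos_pos prod_pos gauss_dens_pos) auto
qed

lemma pref_pos: "0 < pref_dens \<sigma> K \<alpha> y"
  unfolding pref_dens_def using sigma_pos alpha_range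
  by (auto intro!: mult_pos_pos prod_pos gauss_dens_pos)

end

theorem proposition3:
  fixes \<pi> :: "'a::euclidean_space \<Rightarrow> real"
    and \<sigma> :: real and K :: nat and \<alpha> :: "nat \<Rightarrow> real"
    and f :: "nat \<Rightarrow> 'a \<Rightarrow> 'a"
  assumes pi_meas: "\<pi> \<in> borel_measurable lborel"
    and pi_nonneg: "\<And>x. 0 \<le> \<pi> x"
    and pi_prob: "(\<integral>\<^sup>+ x. ennreal (\<pi> x) \<partial>lborel) = 1"
    and pi_pos: "AE x in lborel. 0 < \<pi> x"
    and sigma_pos: "0 < \<sigma>"
    and K_ge: "1 \<le> K"
    and alpha_range: "\<And>k. k \<in> {1..K} \<Longrightarrow> 0 < \<alpha> k \<and> \<alpha> k < 1"
    and f_meas: "\<And>k. k \<in> {1..K} \<Longrightarrow> f k \<in> borel_measurable borel"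
    and f_int: "\<And>k. k \<in> {1..K} \<Longrightarrow>
        integrable (q_meas \<sigma> K \<alpha> f) (\<lambda>y. (norm (f k (y (K - k))))\<^sup>2)"
    and logpi_int: "integrable (q_meas \<sigma> K \<alpha> f)
        (\<lambda>y. ln (gauss_dens (\<sigma>\<^sup>2) 0 (y K) / \<pi> (y K)))"
  shows
    "(distr (q_meas \<sigma> K \<alpha> f) (PiM {1..K} (\<lambda>_. lborel))
        (\<lambda>y. \<lambda>k\<in>{1..K}. eps_noise \<sigma> K \<alpha> f k y)
      = PiM {1..K} (\<lambda>_. std_gauss))
   \<and> (\<forall>y. ln (q_dens \<sigma> K \<alpha> f y / pref_dens \<sigma> K \<alpha> y) =
        2 * \<sigma>\<^sup>2 * (\<Sum>k=1..K. (lam \<alpha> k)\<^sup>2 / \<alpha> k * (norm (f k (y (K - k))))\<^sup>2)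
      + 2 * \<sigma> * (\<Sum>k=1..K. lam \<alpha> k / sqrt (\<alpha> k) * (f k (y (K - k)) \<bullet> eps_noise \<sigma> K \<alpha> f k y)))
   \<and> KL_dens (traj_space K) (q_dens \<sigma> K \<alpha> f) (p_dens \<sigma> K \<alpha> \<pi>) =
        KL_dens (traj_space K) (q_dens \<sigma> K \<alpha> f) (pref_dens \<sigma> K \<alpha>)
      + (\<integral>y. ln (gauss_dens (\<sigma>\<^sup>2) 0 (y K) / \<pi> (y K)) \<partial>(q_meas \<sigma> K \<alpha> f))
   \<and> KL_dens (traj_space K) (q_dens \<sigma> K \<alpha> f) (p_dens \<sigma> K \<alpha> \<pi>) =
        (\<integral>y. 2 * \<sigma>\<^sup>2 * (\<Sum>k=1..K. (lam \<alpha> k)\<^sup>2 / \<alpha> k * (norm (f k (y (K - k))))\<^sup>2)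
              + ln (gauss_dens (\<sigma>\<^sup>2) 0 (y K) / \<pi> (y K)) \<partial>(q_meas \<sigma> K \<alpha> f))"
proof -
  interpret chain \<sigma> K \<alpha> f
    by unfold_locales (use sigma_pos alpha_range f_meas in auto)
  have Qeq: "q_meas \<sigma> K \<alpha> f = QQ"
    unfolding q_meas_def traj_space_def q_dens_eq ..
  have dens_eq: "density (traj_space K) (\<lambda>y. ennreal (q_dens \<sigma> K \<alpha> f y)) = QQ"
    unfolding traj_space_def q_dens_eq ..
  define A where "A y = 2 * \<sigma>\<^sup>2 * (\<Sum>k=1..K. (lam \<alpha> k)\<^sup>2 / \<alpha> k * (norm (f k (y (K - k))))\<^sup>2)" for y
  define B where "B y = 2 * \<sigma> * (\<Sum>k=1..K. lam \<alpha> k / sqrt (\<alpha> k) * (f k (y (K - k)) \<bullet> eps_noise \<sigma> K \<alpha> f k y))" for y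
  define L where "L y = ln (gauss_dens (\<sigma>\<^sup>2) 0 (y K) / \<pi> (y K))" for y
  have P2': "ln (q_dens \<sigma> K \<alpha> f y / pref_dens \<sigma> K \<alpha> y) = A y + B y" for y
    unfolding A_def B_def by (rule part2) (use sigma_pos alpha_range in auto)
  have fint: "integrable QQ (\<lambda>y. (norm (f k (y (K - k))))\<^sup>2)" if "k \<in> {1..K}" for k
    using f_int[OF that] Qeq by simp
  have intA: "integrable QQ A"
    unfolding A_def
    by (intro Bochner_Integration.integrable_mult_right Bochner_Integration.integrable_sum fint) auto
  have intC: "integrable QQ (\<lambda>y. lam \<alpha> k / sqrt (\<alpha> k) * (f k (y (K - k)) \<bullet> eps_noise \<sigma> K \<alpha> f k y))"
    if "k \<in> {1..K}" for k
    by (intro Bochner_Integration.integrable_mult_right cross_int that fint)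
  have intB: "integrable QQ B"
    unfolding B_def
    by (intro Bochner_Integration.integrable_mult_right Bochner_Integration.integrable_sum intC)
  have intB0: "integral\<^sup>L QQ B = 0"
  proof -
    have "integral\<^sup>L QQ B = 2 * \<sigma> * integral\<^sup>L QQ (\<lambda>y. \<Sum>k=1..K. lam \<alpha> k / sqrt (\<alpha> k) * (f k (y (K - k)) \<bullet> eps_noise \<sigma> K \<alpha> f k y))"
      unfolding B_def by (rule integral_mult_right_zero)
    also have "integral\<^sup>L QQ (\<lambda>y. \<Sum>k=1..K. lam \<alpha> k / sqrt (\<alpha> k) * (f k (y (K - k)) \<bullet> eps_noise \<sigma> K \<alpha> f k y))
        = (\<Sum>k=1..K. integral\<^sup>L QQ (\<lambda>y. lam \<alpha> k / sqrt (\<alpha> k) * (f k (y (K - k)) \<bullet> eps_noise \<sigma> K \<alpha> f k y)))"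
      by (rule Bochner_Integration.integral_sum) (rule intC)
    also have "\<dots> = 0"
      by (simp add: cross_zero fint)
    finally show ?thesis by simp
  qed
  have intL: "integrable QQ L"
    using logpi_int Qeq unfolding L_def by simp
  have KLpref: "KL_dens (traj_space K) (q_dens \<sigma> K \<alpha> f) (pref_dens \<sigma> K \<alpha>) = integral\<^sup>L QQ A"
    unfolding KL_dens_def dens_eq P2'
    by (simp add: Bochner_Integration.integral_add intA intB intB0)
  have pi_meas'[measurable]: "\<pi> \<in> borel_measurable borel" using pi_meas by simp
  have AEp: "AE y in QQ. 0 < \<pi> (y K)"
    using AE_pos[OF pi_meas' pi_pos] by (subst AE_density[OF qnK_meas]) (auto elim: AE_mp)
  have compK[measurable]: "(\<lambda>y. y K) \<in> borel_measurable (PL {0..K})" by (intro comp_meas) auto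
  have [measurable]: "pref_dens \<sigma> K \<alpha> \<in> borel_measurable (PL {0..K})" by (rule pref_meas)
  have [measurable]: "qn K \<in> borel_measurable (PL {0..K})" by (rule qn_meas) simp
  have lnm: "(\<lambda>y. ln (q_dens \<sigma> K \<alpha> f y / p_dens \<sigma> K \<alpha> \<pi> y)) \<in> borel_measurable QQ"
    unfolding q_dens_eq p_dens_def by measurable
  have KLp: "KL_dens (traj_space K) (q_dens \<sigma> K \<alpha> f) (p_dens \<sigma> K \<alpha> \<pi>) = integral\<^sup>L QQ A + integral\<^sup>L QQ L"
  proof -
    have "KL_dens (traj_space K) (q_dens \<sigma> K \<alpha> f) (p_dens \<sigma> K \<alpha> \<pi>) = integral\<^sup>L QQ (\<lambda>y. ln (q_dens \<sigma> K \<alpha> f y / p_dens \<sigma> K \<alpha> \<pi> y))"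
      unfolding KL_dens_def dens_eq ..
    also have "\<dots> = integral\<^sup>L QQ (\<lambda>y. A y + B y + L y)"
    proof (rule integral_cong_AE)
      show "(\<lambda>y. ln (q_dens \<sigma> K \<alpha> f y / p_dens \<sigma> K \<alpha> \<pi> y)) \<in> borel_measurable QQ" by (rule lnm)
      show "(\<lambda>y. A y + B y + L y) \<in> borel_measurable QQ"
        using intA intB intL by (intro borel_measurable_add borel_measurable_integrable)
      show "AE y in QQ. ln (q_dens \<sigma> K \<alpha> f y / p_dens \<sigma> K \<alpha> \<pi> y) = A y + B y + L y"
        using AEp
      proof (rule AE_mp, intro AE_I2 impI)
        fix y assume pos: "0 < \<pi> (y K)"
        have q: "0 < q_dens \<sigma> K \<alpha> f y" using qn_pos q_dens_eq by simp
        have r: "0 < pref_dens \<sigma> K \<alpha> y" by (rule pref_pos)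
        have g: "0 < gauss_dens (\<sigma>\<^sup>2) 0 (y K)" using sigma_pos by (intro gauss_dens_pos) simp
        have "q_dens \<sigma> K \<alpha> f y / p_dens \<sigma> K \<alpha> \<pi> y
            = (q_dens \<sigma> K \<alpha> f y / pref_dens \<sigma> K \<alpha> y) * (gauss_dens (\<sigma>\<^sup>2) 0 (y K) / \<pi> (y K))"
          unfolding p_dens_def using pos r g by (simp add: field_simps)
        also have "ln \<dots> = ln (q_dens \<sigma> K \<alpha> f y / pref_dens \<sigma> K \<alpha> y) + ln (gauss_dens (\<sigma>\<^sup>2) 0 (y K) / \<pi> (y K))"
          using q r g pos by (intro ln_mult_pos) auto
        finally show "ln (q_dens \<sigma> K \<alpha> f y / p_dens \<sigma> K \<alpha> \<pi> y) = A y + B y + L y"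
          unfolding P2' L_def by simp
      qed
    qed
    also have "\<dots> = integral\<^sup>L QQ A + integral\<^sup>L QQ B + integral\<^sup>L QQ L"
      using intA intB intL by (simp add: Bochner_Integration.integral_add)
    finally show ?thesis using intB0 by simp
  qed
  have last: "integral\<^sup>L QQ (\<lambda>y. A y + L y) = integral\<^sup>L QQ A + integral\<^sup>L QQ L"
    using intA intL by (simp add: Bochner_Integration.integral_add)
  show ?thesis
  proof (intro conjI allI)
    show "distr (q_meas \<sigma> K \<alpha> f) (PiM {1..K} (\<lambda>_. lborel)) (\<lambda>y. \<lambda>k\<in>{1..K}. eps_noise \<sigma> K \<alpha> f k y)
        = PiM {1..K} (\<lambda>_. std_gauss)"
      unfolding Qeq by (rule part1)
    show "ln (q_dens \<sigma> K \<alpha> f y / pref_dens \<sigma> K \<alpha> y) =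
        2 * \<sigma>\<^sup>2 * (\<Sum>k=1..K. (lam \<alpha> k)\<^sup>2 / \<alpha> k * (norm (f k (y (K - k))))\<^sup>2)
      + 2 * \<sigma> * (\<Sum>k=1..K. lam \<alpha> k / sqrt (\<alpha> k) * (f k (y (K - k)) \<bullet> eps_noise \<sigma> K \<alpha> f k y))" for y
      using P2' unfolding A_def B_def by blast
    show "KL_dens (traj_space K) (q_dens \<sigma> K \<alpha> f) (p_dens \<sigma> K \<alpha> \<pi>) =
        KL_dens (traj_space K) (q_dens \<sigma> K \<alpha> f) (pref_dens \<sigma> K \<alpha>)
      + (\<integral>y. ln (gauss_dens (\<sigma>\<^sup>2) 0 (y K) / \<pi> (y K)) \<partial>(q_meas \<sigma> K \<alpha> f))"
      unfolding KLp KLpref Qeq L_def ..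
    show "KL_dens (traj_space K) (q_dens \<sigma> K \<alpha> f) (p_dens \<sigma> K \<alpha> \<pi>) =
        (\<integral>y. 2 * \<sigma>\<^sup>2 * (\<Sum>k=1..K. (lam \<alpha> k)\<^sup>2 / \<alpha> k * (norm (f k (y (K - k))))\<^sup>2)
              + ln (gauss_dens (\<sigma>\<^sup>2) 0 (y K) / \<pi> (y K)) \<partial>(q_meas \<sigma> K \<alpha> f))"
      unfolding KLp Qeq using last unfolding A_def L_def by simp
  qed
qed

end
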